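(* Let $w\in S_n$ be inverse fireworks. For each $r\in[n]$, $\mathsf{rajcode}(w)_r=\left|\{r'>r:\ (r,r')\in\mathsf{Inv}(w),\ \text{or } \big(w(r')>w(r)\text{ and }(r',r'')\in\mathsf{Inv}(w)\text{ for some }r''\big)\}\right|.$
   Context: A permutation is fireworks if the initial elements of its maximal decreasing runs (in one-line notation) are increasing; $w$ is inverse fireworks if $w^{-1}$ is fireworks. $\mathsf{Inv}(w)=\{(i,j):i<j,w(i)>w(j)\}$. $\mathrm{LIS}^w(q)$ is the length of the longest increasing subsequence of $w$ starting with $q$, and $\mathsf{rajcode}(w)_r=n+1-r-\mathrm{LIS}^w(w(r))$ for $r\in[n]$. *)

theory Defs
  imports "HOL-Combinatorics.Permutations"
begin

text \<open>Permutations of [n] = {1..n} are functions w :: nat => nat with w permutes {1..n};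
  one-line notation is w(1) w(2) ... w(n).\<close>

definition run_start :: "(nat \<Rightarrow> nat) \<Rightarrow> nat \<Rightarrow> nat \<Rightarrow> bool" where
  "run_start w n i \<longleftrightarrow> 1 \<le> i \<and> i \<le> n \<and> (i = 1 \<or> w (i - 1) < w i)"

definition fireworks :: "(nat \<Rightarrow> nat) \<Rightarrow> nat \<Rightarrow> bool" where
  "fireworks w n \<longleftrightarrow>
     (\<forall>i j. run_start w n i \<and> run_start w n j \<and> i < j \<longrightarrow> w i < w j)"

definition inverse_fireworks :: "(nat \<Rightarrow> nat) \<Rightarrow> nat \<Rightarrow> bool" where
  "inverse_fireworks w n \<longleftrightarrow> fireworks (inv w) n"

definition Inv :: "(nat \<Rightarrow> nat) \<Rightarrow> nat \<Rightarrow> (nat \<times> nat) set" where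
  "Inv w n = {(i, j). 1 \<le> i \<and> i < j \<and> j \<le> n \<and> w i > w j}"

definition LIS :: "(nat \<Rightarrow> nat) \<Rightarrow> nat \<Rightarrow> nat \<Rightarrow> nat" where
  "LIS w n q = (let p = inv_into {1..n} w q in
     Max {card S | S. S \<subseteq> {p..n} \<and> p \<in> S \<and> strict_mono_on S w})"

definition rajcode :: "(nat \<Rightarrow> nat) \<Rightarrow> nat \<Rightarrow> nat \<Rightarrow> int" where
  "rajcode w n r = int n + 1 - int r - int (LIS w n (w r))"

end

theory Submission
  imports Defs
begin

lemma L1:
  assumes hu: "u permutes {1..n}" and fw: "fireworks u n"
  shows "1 \<le> b \<Longrightarrow> b < a \<Longrightarrow> run_start u n a \<Longrightarrow> u b < u a"
proof (induction b rule: less_induct)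
  case (less b)
  have an: "a \<le> n" using less.prems unfolding run_start_def by auto
  show ?case
  proof (cases "run_start u n b")
    case True
    then show ?thesis using fw less.prems unfolding fireworks_def by blast
  next
    case False
    then have b1: "b \<noteq> 1" and nl: "\<not> u (b - 1) < u b"
      using less.prems an unfolding run_start_def by auto
    have "u (b - 1) \<noteq> u b" using permutes_inj[OF hu] b1 less.prems
      by (metis One_nat_def Suc_pred' diff_less inj_eq le_neq_implies_less less_numeral_extra(1) not_one_le_zero zero_less_iff_neq_zero less_irrefl)
    moreover have "u (b - 1) < u a" using less.IH[of "b - 1"] less.prems b1 by auto
    ultimately show ?thesis using nl by auto
  qed
qed

lemma L2:
  assumes hu: "u permutes {1..n}"
  shows "a \<le> k \<Longrightarrow> k \<le> b \<Longrightarrow> b \<le> n \<Longrightarrow> 1 \<le> a \<Longrightarrow>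
     (\<forall>c. a < c \<and> c \<le> b \<longrightarrow> \<not> run_start u n c) \<Longrightarrow> u b \<le> u k"
proof (induction b rule: less_induct)
  case (less b)
  show ?case
  proof (cases "b = k")
    case True then show ?thesis by simp
  next
    case False
    then have "a < b" using less.prems by auto
    then have nr: "\<not> run_start u n b" using less.prems by auto
    then have b1: "b \<noteq> 1" and nl: "\<not> u (b - 1) < u b"
      using less.prems \<open>a < b\<close> unfolding run_start_def by auto
    have "u (b - 1) \<noteq> u b" using permutes_inj[OF hu] b1 \<open>a < b\<close>
      by (metis diff_less inj_eq less_nat_zero_code less_one not_gr_zero less_irrefl)
    moreover have "u (b - 1) \<le> u k"
    proof (rule less.IH[of "b - 1"])
      show "b - 1 < b" "k \<le> b - 1" "b - 1 \<le> n" using less.prems False \<open>a < b\<close> by auto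
      show "\<forall>c. a < c \<and> c \<le> b - 1 \<longrightarrow> \<not> run_start u n c" using less.prems by auto
    qed (use less.prems in auto)
    ultimately show ?thesis using nl by auto
  qed
qed

theorem proposition5p9:
  fixes w :: "nat \<Rightarrow> nat" and n r :: nat
  assumes "w permutes {1..n}"
    and "inverse_fireworks w n"
    and "r \<in> {1..n}"
  shows "rajcode w n r = int (card {r'. r < r' \<and> r' \<le> n \<and>
            ((r, r') \<in> Inv w n \<or> (w r' > w r \<and> (\<exists>r''. (r', r'') \<in> Inv w n)))})"
proof -
  define u where "u = inv w"
  have hw: "w permutes {1..n}" by fact
  have hu: "u permutes {1..n}" unfolding u_def using permutes_inv[OF hw] .
  have fw: "fireworks u n" using assms(2) unfolding u_def inverse_fireworks_def .
  have wu: "\<And>y. w (u y) = y" and uw: "\<And>x. u (w x) = x"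
    unfolding u_def using permutes_inverses[OF hw] by auto
  have win: "\<And>x. w x \<in> {1..n} \<longleftrightarrow> x \<in> {1..n}" using permutes_in_image[OF hw] .
  have uin: "\<And>x. u x \<in> {1..n} \<longleftrightarrow> x \<in> {1..n}" using permutes_in_image[OF hu] .
  have winj: "inj w" using permutes_inj[OF hw] .
  have uinj: "inj u" using permutes_inj[OF hu] .
  have r: "1 \<le> r" "r \<le> n" using assms(3) by auto
  have wr: "1 \<le> w r" "w r \<le> n" using win[of r] r by auto
  define RS where "RS = {a. run_start u n a \<and> w r < a}"
  have RSsub: "RS \<subseteq> {1..n}" unfolding RS_def run_start_def by auto
  have finRS: "finite RS" using RSsub finite_subset by blast
  have RSprop: "r < u a \<and> u a \<le> n" if "a \<in> RS" for a
  proof -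
    have "u (w r) < u a" using L1[OF hu fw, of "w r" a] that wr unfolding RS_def by auto
    moreover have "u a \<le> n" using that RSsub uin[of a] by auto
    ultimately show ?thesis using uw by simp
  qed
  have cardU: "card (u ` RS) = card RS"
    using card_image inj_on_subset[OF uinj] by blast
  define T where "T = {r'. r < r' \<and> r' \<le> n \<and>
            ((r, r') \<in> Inv w n \<or> (w r' > w r \<and> (\<exists>r''. (r', r'') \<in> Inv w n)))}"
  define U where "U = {r'. r < r' \<and> r' \<le> n \<and> w r < w r' \<and> \<not>(\<exists>r''. (r', r'') \<in> Inv w n)}"
  have split: "{r<..n} = T \<union> U" "T \<inter> U = {}"
  proof -
    show "T \<inter> U = {}" unfolding T_def U_def Inv_def by auto
    show "{r<..n} = T \<union> U"
    proof
      show "T \<union> U \<subseteq> {r<..n}" unfolding T_def U_def by auto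
      show "{r<..n} \<subseteq> T \<union> U"
      proof
        fix x assume x: "x \<in> {r<..n}"
        then have "w x \<noteq> w r" using winj by (metis greaterThanAtMost_iff inj_eq less_irrefl)
        then show "x \<in> T \<union> U" using x r unfolding T_def U_def Inv_def by auto
      qed
    qed
  qed
  have UeqRS: "U = u ` RS"
  proof
    show "U \<subseteq> u ` RS"
    proof
      fix r' assume h: "r' \<in> U"
      define a where "a = w r'"
      have r'n: "r' \<in> {1..n}" using h r unfolding U_def by auto
      have a1: "1 \<le> a" "a \<le> n" using win[of r'] r'n unfolding a_def by auto
      have ua: "u a = r'" unfolding a_def using uw by simp
      have "run_start u n a"
      proof (rule ccontr)
        assume "\<not> run_start u n a"
        then have a2: "a \<noteq> 1" and nl: "\<not> u (a - 1) < r'" using a1 ua unfolding run_start_def by auto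
        have "u (a - 1) \<noteq> u a" using uinj a2 a1
          by (metis diff_less inj_eq less_numeral_extra(1) not_one_le_zero zero_less_iff_neq_zero less_irrefl)
        then have gt: "u (a - 1) > r'" using nl ua by auto
        have "u (a - 1) \<le> n" using uin[of "a - 1"] a1 a2 by auto
        moreover have "w (u (a - 1)) < w r'" using wu a2 a1 unfolding a_def[symmetric] by auto
        ultimately have "(r', u (a - 1)) \<in> Inv w n" using gt r'n unfolding Inv_def by auto
        then show False using h unfolding U_def by auto
      qed
      moreover have "w r < a" using h unfolding U_def a_def by auto
      ultimately show "r' \<in> u ` RS" unfolding RS_def using ua by force
    qed
    show "u ` RS \<subseteq> U"
    proof
      fix r' assume "r' \<in> u ` RS"
      then obtain a where a: "a \<in> RS" and r'a: "r' = u a" by auto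
      have 1: "r < r' \<and> r' \<le> n" using RSprop[OF a] r'a by auto
      have 2: "w r < w r'" using a r'a wu unfolding RS_def by auto
      have 3: "\<not>(\<exists>r''. (r', r'') \<in> Inv w n)"
      proof
        assume "\<exists>r''. (r', r'') \<in> Inv w n"
        then obtain r'' where r'': "r' < r''" "r'' \<le> n" "w r'' < w r'" unfolding Inv_def by auto
        have "1 \<le> w r''" using win[of r''] r'' 1 r by auto
        then have "u (w r'') < u a" using L1[OF hu fw, of "w r''" a] r'' a r'a wu unfolding RS_def by auto
        then show False using uw r'' r'a by auto
      qed
      show "r' \<in> U" using 1 2 3 unfolding U_def by auto
    qed
  qed
  have finT: "finite T" unfolding T_def by auto
  have finU: "finite U" unfolding U_def by auto
  have cardT: "card T + card RS = n - r"
    using card_Un_disjoint[OF finT finU split(2)] split(1) cardU UeqRS by (metis card_greaterThanAtMost)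
  have LISeq: "LIS w n (w r) = 1 + card RS"
  proof -
    have ir: "inv_into {1..n} w (w r) = r"
      using inv_into_f_f[OF inj_on_subset[OF winj] assms(3)] by auto
    define C where "C = {card S | S. S \<subseteq> {r..n} \<and> r \<in> S \<and> strict_mono_on S w}"
    have CS: "C \<subseteq> {..n}"
    proof
      fix c assume "c \<in> C"
      then obtain S where "c = card S" "S \<subseteq> {r..n}" unfolding C_def by auto
      then have "c \<le> card {r..n}" by (metis card_mono finite_atLeastAtMost)
      then have "c \<le> n" using r(1) by simp
      then show "c \<in> {..n}" by simp
    qed
    have finC: "finite C" using CS finite_subset by blast
    define S0 where "S0 = insert r (u ` RS)"
    have S0a: "S0 \<subseteq> {r..n}"
    proof
      fix x assume "x \<in> S0"
      then consider "x = r" | a where "a \<in> RS" "x = u a" unfolding S0_def by (auto simp del: )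
      then show "x \<in> {r..n}"
      proof cases
        case 1 then show ?thesis using r by simp
      next
        case (2 a) then show ?thesis using RSprop[of a] by simp
      qed
    qed
    have S0b: "strict_mono_on S0 w"
    proof (rule strict_mono_onI)
      fix x y assume x: "x \<in> S0" and y: "y \<in> S0" and xy: "x < y"
      have yr: "y \<noteq> r" using x xy S0a by auto
      then obtain b where b: "b \<in> RS" "y = u b" using y unfolding S0_def by auto
      show "w x < w y"
      proof (cases "x = r")
        case True then show ?thesis using b wu unfolding RS_def by auto
      next
        case False
        then obtain a where a: "a \<in> RS" "x = u a" using x unfolding S0_def by auto
        have "a \<noteq> b" using a b xy by auto
        moreover have "\<not> b < a"
        proof
          assume "b < a"
          then have "u b < u a" using fw a b unfolding RS_def fireworks_def by blast
          then show False using a b xy by auto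
        qed
        ultimately show ?thesis using a b wu by auto
      qed
    qed
    have cS0: "card S0 = 1 + card RS"
    proof -
      have "r \<notin> u ` RS"
      proof
        assume "r \<in> u ` RS"
        then obtain a where a: "a \<in> RS" and ua: "u a = r" by auto
        have "r < u a" using RSprop[OF a] by (rule conjunct1)
        then show False unfolding ua by simp
      qed
      then show ?thesis unfolding S0_def using finRS cardU by simp
    qed
    have inC: "1 + card RS \<in> C" unfolding C_def
      using S0a S0b cS0 by (intro CollectI exI[of _ S0]) (simp add: S0_def)
    have ub: "c \<le> 1 + card RS" if "c \<in> C" for c
    proof -
      obtain S where S: "c = card S" "S \<subseteq> {r..n}" "r \<in> S" "strict_mono_on S w"
        using \<open>c \<in> C\<close> unfolding C_def by auto
      have finS: "finite S" using S(2) finite_subset by blast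
      define f where "f x = Max {c. run_start u n c \<and> c \<le> w x}" for x
      have fprop: "run_start u n (f x) \<and> f x \<le> w x \<and> (\<forall>c. f x < c \<and> c \<le> w x \<longrightarrow> \<not> run_start u n c)"
        if "x \<in> {1..n}" for x
      proof -
        let ?C = "{c. run_start u n c \<and> c \<le> w x}"
        have fin: "finite ?C" unfolding run_start_def by auto
        have "1 \<in> ?C" using that win[of x] unfolding run_start_def by auto
        then have ne: "?C \<noteq> {}" by auto
        have "f x \<in> ?C" unfolding f_def using Max_in[OF fin ne] .
        moreover have "\<forall>c\<in>?C. c \<le> f x" unfolding f_def using Max_ge[OF fin] by blast
        ultimately show ?thesis by force
      qed
      have xprop: "x \<in> {1..n} \<and> r < x \<and> w r < w x" if "x \<in> S - {r}" for x
      proof -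
        have "r < x" "x \<le> n" using that S(2) by auto
        then show ?thesis using strict_mono_onD[OF S(4) S(3), of x] that r by auto
      qed
      have fRS: "f ` (S - {r}) \<subseteq> RS"
      proof
        fix y assume "y \<in> f ` (S - {r})"
        then obtain x where x: "x \<in> S - {r}" "y = f x" by auto
        note xp = xprop[OF x(1)]
        note fp = fprop[of x]
        have "w r < f x"
        proof (rule ccontr)
          assume "\<not> w r < f x"
          then have "u (w x) \<le> u (w r)"
            using L2[OF hu, of "f x" "w r" "w x"] xp fp win[of x] unfolding run_start_def by auto
          then show False using uw xp by simp
        qed
        then show "y \<in> RS" using x fp xp unfolding RS_def by auto
      qed
      have finj: "inj_on f (S - {r})"
      proof (rule inj_onI)
        have key: "False" if "x \<in> S - {r}" "y \<in> S - {r}" "f x = f y" "x < y" for x y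
        proof -
          have "w x < w y" using strict_mono_onD[OF S(4)] that by auto
          moreover note xp = xprop[OF that(1)] and yp = xprop[OF that(2)]
          ultimately have "u (w y) \<le> u (w x)"
            using L2[OF hu, of "f y" "w x" "w y"] fprop[of x] fprop[of y] win[of y] that(3)
            unfolding run_start_def by auto
          then show False using uw that(4) by simp
        qed
        fix x y assume "x \<in> S - {r}" "y \<in> S - {r}" "f x = f y"
        then show "x = y" using key[of x y] key[of y x] by (metis linorder_neqE_nat)
      qed
      have "card (S - {r}) \<le> card RS"
        using card_inj_on_le[OF finj fRS finRS] .
      then show ?thesis using S(1,3) finS by (simp add: card_Diff_singleton)
    qed
    have "Max C = 1 + card RS" using Max_eqI[OF finC ub inC] .
    then show ?thesis unfolding LIS_def ir Let_def C_def by simp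
  qed
  show ?thesis
    unfolding rajcode_def LISeq T_def[symmetric] using cardT r by simp
qed

end
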